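(* Let $M\ge3$, $\phi\in\mathrm{Hyp}^M$, $K\ge1$, $\mu\ge1$, and let $\tau_1,\tau_2$ be caps of side length $\mu^{1/2}K^{-1}$ with centers $z_1^c,z_2^c\in\Sigma$. Suppose that $$|t^1_{z_2^c}(z_1^c,z_2^c)|\ge 50\mu^{1/2}K^{-1}\quad\text{and}\quad |t^2_{z_2^c}(z_1^c,z_2^c)|\ge50\mu^{1/2}K^{-1}.$$ Then $$|\Gamma_z(z_1,z_2,z_1',z_2')|\ge 4\mu K^{-2}\qquad\text{for all } z_1,z_1'\in\tau_1,\ z,z_2,z_2'\in\tau_2.$$
   Context: $\Sigma:=[-1,1]^2$, $2\Sigma:=[-2,2]^2$. $\mathrm{Hyp}^M$ ($M\ge3$) is the set of $\phi\in C^M(\Sigma)$ extending to a $C^M$ function on $2\Sigma$ with $\phi(0)=0$, $\nabla\phi(0)=0$, $D^2\phi(0)=\begin{pmatrix}0&1\\1&0\end{pmatrix}$, and $\sup_{2\Sigma}|\partial_x^a\partial_y^b\phi|\le10^{-5}$ for $3\le a+b\le M$. A cap of side length $s$ with center $z^c$ is the closed axis-parallel square of side length $s$ centered at $z^c$, intersected with $\Sigma$. Set $H:=\phi_{xy}^2-\phi_{xx}\phi_{yy}$, $A:=\frac{\phi_{yy}}{\phi_{xy}+\sqrt H}$, $B:=\frac{\phi_{xx}}{\phi_{xy}+\sqrt H}$; $t^1_z(z_1,z_2):=\phi_x(z_2)-\phi_x(z_1)-B(z)(\phi_y(z_2)-\phi_y(z_1))$, $t^2_z(z_1,z_2):=\phi_y(z_2)-\phi_y(z_1)-A(z)(\phi_x(z_2)-\phi_x(z_1))$,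 and $\Gamma_z(z_1,z_2,z_1',z_2'):=\langle (D^2\phi(z))^{-1}(\nabla\phi(z_2)-\nabla\phi(z_1)),\nabla\phi(z_2')-\nabla\phi(z_1')\rangle$. *)

theory Defs
  imports "HOL-Analysis.Analysis"
begin

definition Sigma1 :: "(real \<times> real) set" where
  "Sigma1 = {-1..1} \<times> {-1..1}"

definition Sigma2 :: "(real \<times> real) set" where
  "Sigma2 = {-2..2} \<times> {-2..2}"

text \<open>C^M on the closed square 2Sigma: a family D a b of functions (intended: the partial
  derivative d_x^a d_y^b phi) with D 0 0 = phi on 2Sigma, each D a b (a+b < M) having
  (one-sided at the boundary) partial derivatives D (a+1) b in x and D a (b+1) in y
  within 2Sigma, and all D a b with a+b \<le> M continuous on 2Sigma.\<close>

definition CM_derivs :: "nat \<Rightarrow> (real \<times> real \<Rightarrow> real) \<Rightarrow> (nat \<Rightarrow> nat \<Rightarrow> real \<times> real \<Rightarrow> real) \<Rightarrow> bool" where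
  "CM_derivs M phi D \<longleftrightarrow>
     (\<forall>z\<in>Sigma2. D 0 0 z = phi z) \<and>
     (\<forall>a b. a + b \<le> M \<longrightarrow> continuous_on Sigma2 (D a b)) \<and>
     (\<forall>a b. a + b < M \<longrightarrow> (\<forall>z\<in>Sigma2.
        ((\<lambda>t. D a b (t, snd z)) has_real_derivative D (Suc a) b z) (at (fst z) within {-2..2}) \<and>
        ((\<lambda>t. D a b (fst z, t)) has_real_derivative D a (Suc b) z) (at (snd z) within {-2..2})))"

definition Hyp :: "nat \<Rightarrow> (real \<times> real \<Rightarrow> real) set" where
  "Hyp M = {phi. \<exists>D. CM_derivs M phi D \<and>
     phi (0,0) = 0 \<and> D 1 0 (0,0) = 0 \<and> D 0 1 (0,0) = 0 \<and>
     D 2 0 (0,0) = 0 \<and> D 1 1 (0,0) = 1 \<and> D 0 2 (0,0) = 0 \<and>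
     (\<forall>a b. 3 \<le> a + b \<and> a + b \<le> M \<longrightarrow> (\<forall>z\<in>Sigma2. \<bar>D a b z\<bar> \<le> 10 powi (-5)))}"

text \<open>Partial derivatives (used at points of Sigma, which lie in the interior of 2Sigma).\<close>

definition px :: "(real \<times> real \<Rightarrow> real) \<Rightarrow> real \<times> real \<Rightarrow> real" where
  "px f z = deriv (\<lambda>t. f (t, snd z)) (fst z)"

definition py :: "(real \<times> real \<Rightarrow> real) \<Rightarrow> real \<times> real \<Rightarrow> real" where
  "py f z = deriv (\<lambda>t. f (fst z, t)) (snd z)"

definition phi_xx where "phi_xx phi = px (px phi)"
definition phi_xy where "phi_xy phi = py (px phi)"
definition phi_yy where "phi_yy phi = py (py phi)"

definition Hfun :: "(real \<times> real \<Rightarrow> real) \<Rightarrow> real \<times> real \<Rightarrow> real" where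
  "Hfun phi z = (phi_xy phi z)\<^sup>2 - phi_xx phi z * phi_yy phi z"

definition Afun :: "(real \<times> real \<Rightarrow> real) \<Rightarrow> real \<times> real \<Rightarrow> real" where
  "Afun phi z = phi_yy phi z / (phi_xy phi z + sqrt (Hfun phi z))"

definition Bfun :: "(real \<times> real \<Rightarrow> real) \<Rightarrow> real \<times> real \<Rightarrow> real" where
  "Bfun phi z = phi_xx phi z / (phi_xy phi z + sqrt (Hfun phi z))"

definition t1 :: "(real \<times> real \<Rightarrow> real) \<Rightarrow> real \<times> real \<Rightarrow> real \<times> real \<Rightarrow> real \<times> real \<Rightarrow> real" where
  "t1 phi z z1 z2 = px phi z2 - px phi z1 - Bfun phi z * (py phi z2 - py phi z1)"

definition t2 :: "(real \<times> real \<Rightarrow> real) \<Rightarrow> real \<times> real \<Rightarrow> real \<times> real \<Rightarrow> real \<times> real \<Rightarrow> real" where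
  "t2 phi z z1 z2 = py phi z2 - py phi z1 - Afun phi z * (px phi z2 - px phi z1)"

text \<open>Gamma_z: <(D^2 phi(z))^{-1} u, v> with u = grad phi(z2) - grad phi(z1),
  v = grad phi(z2') - grad phi(z1'); the inverse of the symmetric 2x2 Hessian
  [[p,q],[q,r]] is written out as (1/(pr-q^2)) [[r,-q],[-q,p]].\<close>

definition Gamma :: "(real \<times> real \<Rightarrow> real) \<Rightarrow> real \<times> real \<Rightarrow> real \<times> real \<Rightarrow> real \<times> real
    \<Rightarrow> real \<times> real \<Rightarrow> real \<times> real \<Rightarrow> real" where
  "Gamma phi z z1 z2 z1' z2' =
    (let p = phi_xx phi z; q = phi_xy phi z; r = phi_yy phi z; d = p * r - q\<^sup>2;
         u1 = px phi z2 - px phi z1; u2 = py phi z2 - py phi z1;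
         v1 = px phi z2' - px phi z1'; v2 = py phi z2' - py phi z1'
     in ((r * u1 - q * u2) / d) * v1 + ((- q * u1 + p * u2) / d) * v2)"

definition cap :: "real \<Rightarrow> real \<times> real \<Rightarrow> (real \<times> real) set" where
  "cap s c = ({fst c - s/2 .. fst c + s/2} \<times> {snd c - s/2 .. snd c + s/2}) \<inter> Sigma1"

end

theory Submission
  imports Defs
begin


lemma mvt_bound_lt:
  fixes f f' :: "real \<Rightarrow> real"
  assumes der: "\<And>t. t \<in> {-2<..<2} \<Longrightarrow> (f has_real_derivative f' t) (at t)"
    and bd: "\<And>t. t \<in> {-2<..<2} \<Longrightarrow> \<bar>f' t\<bar> \<le> C"
    and a: "a \<in> {-2<..<2}" and b: "b \<in> {-2<..<2}" and ab: "a < b"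
  shows "\<bar>f b - f a\<bar> \<le> C * \<bar>b - a\<bar>"
proof -
  have "\<And>x. a \<le> x \<Longrightarrow> x \<le> b \<Longrightarrow> DERIV f x :> f' x"
    using a b der by auto
  from MVT2[OF ab this] obtain z where z: "a < z" "z < b" "f b - f a = (b - a) * f' z" by blast
  have "z \<in> {-2<..<2}" using z a b by auto
  hence "\<bar>f' z\<bar> \<le> C" by (rule bd)
  thus ?thesis using z ab by (simp add: abs_mult mult.commute mult_right_mono)
qed

lemma mvt_bound:
  fixes f f' :: "real \<Rightarrow> real"
  assumes der: "\<And>t. t \<in> {-2<..<2} \<Longrightarrow> (f has_real_derivative f' t) (at t)"
    and bd: "\<And>t. t \<in> {-2<..<2} \<Longrightarrow> \<bar>f' t\<bar> \<le> C"
    and a: "a \<in> {-2<..<2}" and b: "b \<in> {-2<..<2}"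
  shows "\<bar>f b - f a\<bar> \<le> C * \<bar>b - a\<bar>"
proof (cases a b rule: linorder_cases)
  case less then show ?thesis using mvt_bound_lt[OF der bd a b] by blast
next
  case equal then show ?thesis
    using bd[OF a] by simp
next
  case greater then show ?thesis using mvt_bound_lt[OF der bd b a] by (simp add: abs_minus_commute)
qed

definition U :: "(real \<times> real) set" where "U = {-2<..<2} \<times> {-2<..<2}"

lemma U_Sigma2: "z \<in> U \<Longrightarrow> z \<in> Sigma2"
  by (auto simp: U_def Sigma2_def)

lemma Sigma1_U: "z \<in> Sigma1 \<Longrightarrow> z \<in> U"
  by (auto simp: U_def Sigma1_def)

lemma D_derx:
  assumes "CM_derivs M phi D" "a + b < M" "x \<in> {-2<..<2}" "y \<in> {-2<..<2}"
  shows "((\<lambda>t. D a b (t, y)) has_real_derivative D (Suc a) b (x,y)) (at x)"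
proof -
  have "(x,y) \<in> Sigma2" using assms(3,4) by (auto simp: Sigma2_def)
  hence "((\<lambda>t. D a b (t, y)) has_real_derivative D (Suc a) b (x,y)) (at x within {-2..2})"
    using assms(1,2) unfolding CM_derivs_def by fastforce
  moreover have "at x within {-2..2} = at x" using assms(3) by (intro at_within_Icc_at) auto
  ultimately show ?thesis by simp
qed

lemma D_dery:
  assumes "CM_derivs M phi D" "a + b < M" "x \<in> {-2<..<2}" "y \<in> {-2<..<2}"
  shows "((\<lambda>t. D a b (x, t)) has_real_derivative D a (Suc b) (x,y)) (at y)"
proof -
  have "(x,y) \<in> Sigma2" using assms(3,4) by (auto simp: Sigma2_def)
  hence "((\<lambda>t. D a b (x, t)) has_real_derivative D a (Suc b) (x,y)) (at y within {-2..2})"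
    using assms(1,2) unfolding CM_derivs_def by fastforce
  moreover have "at y within {-2..2} = at y" using assms(4) by (intro at_within_Icc_at) auto
  ultimately show ?thesis by simp
qed

lemma D_lip:
  assumes cm: "CM_derivs M phi D" and ab: "a + b < M"
    and bd: "\<And>z. z \<in> U \<Longrightarrow> \<bar>D (Suc a) b z\<bar> \<le> C \<and> \<bar>D a (Suc b) z\<bar> \<le> C"
    and z: "(x,y) \<in> U" and z': "(x',y') \<in> U"
  shows "\<bar>D a b (x,y) - D a b (x',y')\<bar> \<le> C * (\<bar>x - x'\<bar> + \<bar>y - y'\<bar>)"
proof -
  have x: "x \<in> {-2<..<2}" and y: "y \<in> {-2<..<2}" using z by (auto simp: U_def)
  have x': "x' \<in> {-2<..<2}" and y': "y' \<in> {-2<..<2}" using z' by (auto simp: U_def)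
  have 1: "\<bar>D a b (x,y) - D a b (x',y)\<bar> \<le> C * \<bar>x - x'\<bar>"
    using mvt_bound[where f="\<lambda>t. D a b (t, y)" and f'="\<lambda>t. D (Suc a) b (t,y)" and C=C, OF _ _ x' x]
      D_derx[OF cm ab _ y] bd y by (auto simp: U_def)
  have 2: "\<bar>D a b (x',y) - D a b (x',y')\<bar> \<le> C * \<bar>y - y'\<bar>"
    using mvt_bound[where f="\<lambda>t. D a b (x', t)" and f'="\<lambda>t. D a (Suc b) (x',t)" and C=C, OF _ _ y' y]
      D_dery[OF cm ab x'] bd x' by (auto simp: U_def)
  show ?thesis using 1 2 by (simp add: distrib_left)
qed

lemma px_D:
  assumes cm: "CM_derivs M phi D" and M: "0 < M" and z: "z \<in> U"
  shows "px phi z = D 1 0 z"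
proof -
  obtain x y where xy: "z = (x,y)" by (cases z)
  have x: "x \<in> {-2<..<2}" and y: "y \<in> {-2<..<2}" using z xy by (auto simp: U_def)
  have "((\<lambda>t. D 0 0 (t, y)) has_real_derivative D 1 0 (x,y)) (at x)"
    using D_derx[OF cm _ x y, of 0 0] M by simp
  hence "((\<lambda>t. phi (t, y)) has_real_derivative D 1 0 (x,y)) (at x)"
    apply (rule has_field_derivative_transform_within_open[where S="{-2<..<2}"])
    using x y cm by (auto simp: CM_derivs_def Sigma2_def)
  thus ?thesis unfolding px_def xy by (simp add: DERIV_imp_deriv)
qed

lemma py_D:
  assumes cm: "CM_derivs M phi D" and M: "0 < M" and z: "z \<in> U"
  shows "py phi z = D 0 1 z"
proof -
  obtain x y where xy: "z = (x,y)" by (cases z)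
  have x: "x \<in> {-2<..<2}" and y: "y \<in> {-2<..<2}" using z xy by (auto simp: U_def)
  have "((\<lambda>t. D 0 0 (x, t)) has_real_derivative D 0 1 (x,y)) (at y)"
    using D_dery[OF cm _ x y, of 0 0] M by simp
  hence "((\<lambda>t. phi (x, t)) has_real_derivative D 0 1 (x,y)) (at y)"
    apply (rule has_field_derivative_transform_within_open[where S="{-2<..<2}"])
    using x y cm by (auto simp: CM_derivs_def Sigma2_def)
  thus ?thesis unfolding py_def xy by (simp add: DERIV_imp_deriv)
qed

lemma pxx_D:
  assumes cm: "CM_derivs M phi D" and M: "2 < M" and z: "z \<in> U"
  shows "phi_xx phi z = D 2 0 z"
proof -
  obtain x y where xy: "z = (x,y)" by (cases z)
  have x: "x \<in> {-2<..<2}" and y: "y \<in> {-2<..<2}" using z xy by (auto simp: U_def)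
  have "((\<lambda>t. D 1 0 (t, y)) has_real_derivative D 2 0 (x,y)) (at x)"
    using D_derx[OF cm _ x y, of 1 0] M by (simp add: numeral_2_eq_2)
  hence "((\<lambda>t. px phi (t, y)) has_real_derivative D 2 0 (x,y)) (at x)"
    apply (rule has_field_derivative_transform_within_open[where S="{-2<..<2}"])
    using x y px_D[OF cm] M by (auto simp: U_def)
  thus ?thesis unfolding phi_xx_def px_def[of "px phi"] xy by (simp add: DERIV_imp_deriv)
qed

lemma pxy_D:
  assumes cm: "CM_derivs M phi D" and M: "2 < M" and z: "z \<in> U"
  shows "phi_xy phi z = D 1 1 z"
proof -
  obtain x y where xy: "z = (x,y)" by (cases z)
  have x: "x \<in> {-2<..<2}" and y: "y \<in> {-2<..<2}" using z xy by (auto simp: U_def)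
  have "((\<lambda>t. D 1 0 (x, t)) has_real_derivative D 1 1 (x,y)) (at y)"
    using D_dery[OF cm _ x y, of 1 0] M by simp
  hence "((\<lambda>t. px phi (x, t)) has_real_derivative D 1 1 (x,y)) (at y)"
    apply (rule has_field_derivative_transform_within_open[where S="{-2<..<2}"])
    using x y px_D[OF cm] M by (auto simp: U_def)
  thus ?thesis unfolding phi_xy_def py_def[of "px phi"] xy by (simp add: DERIV_imp_deriv)
qed

lemma pyy_D:
  assumes cm: "CM_derivs M phi D" and M: "2 < M" and z: "z \<in> U"
  shows "phi_yy phi z = D 0 2 z"
proof -
  obtain x y where xy: "z = (x,y)" by (cases z)
  have x: "x \<in> {-2<..<2}" and y: "y \<in> {-2<..<2}" using z xy by (auto simp: U_def)
  have "((\<lambda>t. D 0 1 (x, t)) has_real_derivative D 0 2 (x,y)) (at y)"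
    using D_dery[OF cm _ x y, of 0 1] M by (simp add: numeral_2_eq_2)
  hence "((\<lambda>t. py phi (x, t)) has_real_derivative D 0 2 (x,y)) (at y)"
    apply (rule has_field_derivative_transform_within_open[where S="{-2<..<2}"])
    using x y py_D[OF cm] M by (auto simp: U_def)
  thus ?thesis unfolding phi_yy_def py_def[of "py phi"] xy by (simp add: DERIV_imp_deriv)
qed



lemma gamma_id:
  fixes p q r S u1 u2 v1 v2 :: real
  assumes S2: "S^2 = q^2 - p*r" and H: "q^2 - p*r > 0" and P: "q + S > 0"
  shows "((r*u1 - q*u2)/(p*r - q^2))* v1 + ((- q*u1 + p*u2)/(p*r - q^2))* v2
       = (q+S)/(2*(q^2 - p*r)) * ((u1 - p/(q+S)*u2)*(v2 - r/(q+S)* v1) + (u2 - r/(q+S)*u1)*(v1 - p/(q+S)* v2))"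
proof -
  define P where "P = q + S"
  have Pnz: "P \<noteq> 0" using P P_def by simp
  have pr: "p*r = (q - S) * P" using S2 unfolding P_def by (simp add: algebra_simps power2_eq_square)
  have br: "P * ((u1 - p/P*u2)*(v2 - r/P* v1) + (u2 - r/P*u1)*(v1 - p/P* v2))
      = (P + p*r/P)*(u1* v2+u2* v1) - 2*r*u1* v1 - 2*p*u2* v2"
    using Pnz by (simp add: field_simps power2_eq_square)
  have "P + p*r/P = 2*q" using Pnz pr unfolding P_def by (simp add: field_simps)
  hence br2: "P * ((u1 - p/P*u2)*(v2 - r/P* v1) + (u2 - r/P*u1)*(v1 - p/P* v2))
      = 2*q*(u1* v2+u2* v1) - 2*r*u1* v1 - 2*p*u2* v2" using br by simp
  have Hnz: "q^2 - p*r \<noteq> 0" using H by simp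
  have "P/(2*(q^2 - p*r)) * ((u1 - p/P*u2)*(v2 - r/P* v1) + (u2 - r/P*u1)*(v1 - p/P* v2))
     = (2*q*(u1* v2+u2* v1) - 2*r*u1* v1 - 2*p*u2* v2) / (2*(q^2 - p*r))"
    using br2 by (metis (no_types, lifting) mult.commute times_divide_eq_left)
  also have "\<dots> = ((r*u1 - q*u2) * v1 + (- q*u1 + p*u2) * v2)/(p*r - q^2)"
  proof -
    have e: "p*r - q^2 = - (q^2 - p*r)" by simp
    show ?thesis unfolding e using Hnz
      by (simp add: frac_eq_eq) (simp add: algebra_simps)
  qed
  also have "\<dots> = ((r*u1 - q*u2)/(p*r - q^2)) * v1 + ((- q*u1 + p*u2)/(p*r - q^2)) * v2"
    by (simp add: add_divide_distrib)
  finally show ?thesis unfolding P_def by simp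
qed

lemma basic_bounds:
  fixes p q r :: real
  assumes "\<bar>p\<bar> \<le> 1/10" "\<bar>r\<bar> \<le> 1/10" "\<bar>q - 1\<bar> \<le> 1/10"
  shows "q^2 - p*r \<ge> 8/10" "q^2 - p*r \<le> 122/100" "sqrt (q^2 - p*r) \<ge> 89/100"
    "q + sqrt (q^2 - p*r) \<ge> 179/100" "q \<ge> 9/10" "q \<le> 11/10"
    "sqrt (q^2 - p*r) \<le> 111/100" "q + sqrt (q^2 - p*r) \<le> 221/100"
proof -
  have pr: "\<bar>p*r\<bar> \<le> 1/100"
  proof -
    have "\<bar>p*r\<bar> = \<bar>p\<bar>*\<bar>r\<bar>" by (simp add: abs_mult)
    also have "\<dots> \<le> (1/10)*(1/10)" using assms by (intro mult_mono) auto
    finally show ?thesis by simp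
  qed
  show q1: "q \<ge> 9/10" "q \<le> 11/10" using assms(3) unfolding abs_le_iff by linarith+
  have "q^2 \<ge> (9/10)^2" using q1 by (intro power_mono) auto
  moreover have "q^2 \<le> (11/10)^2" using q1 by (intro power_mono) auto
  ultimately show H1: "q^2 - p*r \<ge> 8/10" and "q^2 - p*r \<le> 122/100" using pr by (auto simp: power2_eq_square)
  have "sqrt (q^2 - p*r) \<ge> sqrt ((89/100)^2)" using H1 by (intro real_sqrt_le_mono) (simp add: power2_eq_square)
  thus S: "sqrt (q^2 - p*r) \<ge> 89/100" by simp
  thus "q + sqrt (q^2 - p*r) \<ge> 179/100" using q1 by simp
  have "sqrt (q^2 - p*r) \<le> sqrt ((111/100)^2)" using \<open>q^2 - p*r \<le> 122/100\<close>
    by (intro real_sqrt_le_mono) (simp add: power2_eq_square)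
  thus S: "sqrt (q^2 - p*r) \<le> 111/100" by simp
  thus "q + sqrt (q^2 - p*r) \<le> 221/100" using q1 by simp
qed

lemma quot_lip:
  fixes p q r p0 q0 r0 e :: real
  assumes b: "\<bar>p\<bar> \<le> 1/10" "\<bar>r\<bar> \<le> 1/10" "\<bar>q - 1\<bar> \<le> 1/10"
    and b0: "\<bar>p0\<bar> \<le> 1/10" "\<bar>r0\<bar> \<le> 1/10" "\<bar>q0 - 1\<bar> \<le> 1/10"
    and d: "\<bar>p - p0\<bar> \<le> e" "\<bar>q - q0\<bar> \<le> e" "\<bar>r - r0\<bar> \<le> e"
  shows "\<bar>p/(q + sqrt (q^2 - p*r)) - p0/(q0 + sqrt (q0^2 - p0*r0))\<bar> \<le> e"
proof -
  define H where "H = q^2 - p*r"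
  define H0 where "H0 = q0^2 - p0*r0"
  define S where "S = sqrt H"
  define S0 where "S0 = sqrt H0"
  define P where "P = q + S"
  define P0 where "P0 = q0 + S0"
  note bb = basic_bounds[OF b, folded H_def, folded S_def, folded P_def]
  note bb0 = basic_bounds[OF b0, folded H0_def, folded S0_def, folded P0_def]
  have e0: "e \<ge> 0" using d(1) by linarith
  have qq: "\<bar>q + q0\<bar> \<le> 22/10" using bb bb0 by simp
  have "\<bar>(q-q0)*(q+q0)\<bar> \<le> e*(22/10)" unfolding abs_mult
    using d(2) qq by (intro mult_mono) auto
  moreover have "\<bar>p*(r-r0)\<bar> \<le> (1/10)*e" unfolding abs_mult
    using d(3) b(1) by (intro mult_mono) auto
  moreover have "\<bar>r0*(p-p0)\<bar> \<le> (1/10)*e" unfolding abs_mult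
    using d(1) b0(2) by (intro mult_mono) auto
  moreover have "H - H0 = (q-q0)*(q+q0) - p*(r-r0) - r0*(p-p0)"
    unfolding H_def H0_def by (simp add: algebra_simps power2_eq_square)
  ultimately have dH: "\<bar>H - H0\<bar> \<le> 24/10*e" by linarith
  have "(S - S0)*(S + S0) = H - H0" unfolding S_def S0_def using bb(1) bb0(1)
    by (simp add: algebra_simps power2_eq_square[symmetric])
  moreover have "S + S0 \<ge> 0" using bb bb0 by simp
  ultimately have "\<bar>S - S0\<bar> * (S + S0) = \<bar>H - H0\<bar>"
    by (metis abs_mult abs_of_nonneg)
  hence "\<bar>S - S0\<bar> * (S + S0) \<le> 24/10*e" using dH by simp
  moreover have "\<bar>S - S0\<bar> * (178/100) \<le> \<bar>S - S0\<bar> * (S + S0)"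
    using bb bb0 by (intro mult_left_mono) auto
  ultimately have "\<bar>S - S0\<bar> * (178/100) \<le> 24/10*e" by linarith
  hence dS: "\<bar>S - S0\<bar> \<le> 15/10*e" using e0 by simp
  have dP: "\<bar>P - P0\<bar> \<le> 25/10*e" unfolding P_def P0_def using dS d(2) by linarith
  have num: "\<bar>(p-p0)*P0 + p0*(P0-P)\<bar> \<le> e*(221/100) + (1/10)*(25/10*e)"
  proof -
    have "\<bar>(p-p0)*P0\<bar> \<le> e*(221/100)" unfolding abs_mult using d(1) bb0 by (intro mult_mono) auto
    moreover have "\<bar>p0*(P0-P)\<bar> \<le> (1/10)*(25/10*e)" unfolding abs_mult using dP b0(1)
      by (intro mult_mono) (auto simp: abs_minus_commute)
    ultimately show ?thesis by (smt (verit) abs_triangle_ineq)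
  qed
  have Ppos: "P > 0" "P0 > 0" using bb bb0 by auto
  have "p/P - p0/P0 = ((p-p0)*P0 + p0*(P0-P))/(P*P0)"
    using Ppos by (simp add: field_simps)
  hence "\<bar>p/P - p0/P0\<bar> = \<bar>(p-p0)*P0 + p0*(P0-P)\<bar>/(P*P0)" using Ppos by simp
  also have "\<dots> \<le> (e*(221/100) + (1/10)*(25/10*e)) / ((179/100)*(179/100))"
    using num Ppos bb bb0 e0 by (intro frac_le mult_mono) auto
  also have "\<dots> \<le> e" using e0 by simp
  finally show ?thesis unfolding P_def P0_def S_def S0_def H_def H0_def .
qed



lemma final_comb:
  fixes s T1 T2 a1 a2 b1 b2 c :: real
  assumes s: "s > 0" and T: "\<bar>T1\<bar> \<ge> 50* s" "\<bar>T2\<bar> \<ge> 50* s"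
    and a: "\<bar>a1 - T1\<bar> \<le> 5* s" "\<bar>b1 - T1\<bar> \<le> 5* s" "\<bar>a2 - T2\<bar> \<le> 5* s" "\<bar>b2 - T2\<bar> \<le> 5* s"
    and c: "c \<ge> 1/2"
  shows "\<bar>c*(a1*b2 + a2*b1)\<bar> \<ge> 4* s^2"
proof -
  have ex: "\<exists>e::real. (e = 1 \<or> e = -1) \<and> e*T = \<bar>T\<bar>" for T :: real
    by (cases "T \<ge> 0") auto
  obtain e1 where e1: "e1 = 1 \<or> e1 = -1" "e1*T1 = \<bar>T1\<bar>" using ex by blast
  obtain e2 where e2: "e2 = 1 \<or> e2 = -1" "e2*T2 = \<bar>T2\<bar>" using ex by blast
  have key: "e*x \<ge> 45 * s" if "e = 1 \<or> e = -1" "e*T = \<bar>T\<bar>" "\<bar>T\<bar> \<ge> 50 * s" "\<bar>x - T\<bar> \<le> 5 * s"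
    for e x T :: real
    using that(1)
  proof
    assume e: "e = 1" show ?thesis using that(2-4) unfolding e by linarith
  next
    assume e: "e = -1" show ?thesis using that(2-4) unfolding e by linarith
  qed
  have A1: "e1*a1 \<ge> 45* s" using key[OF e1 T(1) a(1)] .
  have B1: "e1*b1 \<ge> 45* s" using key[OF e1 T(1) a(2)] .
  have A2: "e2*a2 \<ge> 45* s" using key[OF e2 T(2) a(3)] .
  have B2: "e2*b2 \<ge> 45* s" using key[OF e2 T(2) a(4)] .
  have p1: "0 \<le> e1*a1" "0 \<le> e2*a2" "0 \<le> 45 * s" using A1 A2 s by linarith+
  have "(e1*a1)*(e2*b2) \<ge> (45 * s)*(45 * s)" using mult_mono[OF A1 B2 p1(1) p1(3)] .
  moreover have "(e2*a2)*(e1*b1) \<ge> (45 * s)*(45 * s)" using mult_mono[OF A2 B1 p1(2) p1(3)] .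
  ultimately have "(e1*e2)*(a1*b2 + a2*b1) \<ge> 4050* s^2"
    by (simp add: algebra_simps power2_eq_square)
  moreover have "\<bar>e1*e2\<bar> = 1" using e1 e2 by auto
  ultimately have X: "\<bar>a1*b2 + a2*b1\<bar> \<ge> 4050 * s^2"
  proof -
    assume h1: "(e1*e2)*(a1*b2 + a2*b1) \<ge> 4050 * s^2" and h2: "\<bar>e1*e2\<bar> = 1"
    have "(e1*e2)*(a1*b2 + a2*b1) \<le> \<bar>(e1*e2)*(a1*b2 + a2*b1)\<bar>" by (rule abs_ge_self)
    also have "\<dots> = \<bar>a1*b2 + a2*b1\<bar>" using h2 by (simp add: abs_mult)
    finally show ?thesis using h1 by linarith
  qed
  have "\<bar>c*(a1*b2 + a2*b1)\<bar> = c*\<bar>a1*b2 + a2*b1\<bar>" using c by (simp add: abs_mult)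
  also have "\<dots> \<ge> (1/2)*(4050* s^2)" using mult_mono[OF c X] c by simp
  finally have "\<bar>c*(a1*b2 + a2*b1)\<bar> \<ge> (1/2)*(4050 * s^2)" .
  moreover have "s^2 \<ge> 0" by simp
  ultimately show ?thesis by linarith
qed

lemma err_bound:
  fixes x X y Y B B0 s :: real
  assumes "\<bar>x - X\<bar> \<le> 4* s" "\<bar>y - Y\<bar> \<le> 4* s" "\<bar>Y\<bar> \<le> 8" "\<bar>B\<bar> \<le> 1/10"
    "\<bar>B - B0\<bar> \<le> s/100000" "s > 0"
  shows "\<bar>(x - B*y) - (X - B0*Y)\<bar> \<le> 5* s"
proof -
  have "\<bar>B*(y-Y)\<bar> \<le> (1/10)*(4* s)" unfolding abs_mult using assms by (intro mult_mono) auto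
  moreover have "\<bar>(B-B0)*Y\<bar> \<le> (s/100000)*8" unfolding abs_mult using assms by (intro mult_mono) auto
  moreover have "(x - B*y) - (X - B0*Y) = (x - X) - B*(y-Y) - (B-B0)*Y" by (simp add: algebra_simps)
  moreover have "\<bar>(x - X) - B*(y-Y) - (B-B0)*Y\<bar> \<le> \<bar>x - X\<bar> + \<bar>B*(y-Y)\<bar> + \<bar>(B-B0)*Y\<bar>" by linarith
  ultimately show ?thesis using assms(1,6) by linarith
qed

lemma cap_D:
  assumes "w \<in> cap s c"
  shows "w \<in> Sigma1" "\<bar>fst w - fst c\<bar> \<le> s/2" "\<bar>snd w - snd c\<bar> \<le> s/2"
proof -
  have h: "w \<in> Sigma1" "fst c - s/2 \<le> fst w" "fst w \<le> fst c + s/2" "snd c - s/2 \<le> snd w" "snd w \<le> snd c + s/2"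
    using assms by (auto simp: cap_def mem_Times_iff)
  then show "w \<in> Sigma1" "\<bar>fst w - fst c\<bar> \<le> s/2" "\<bar>snd w - snd c\<bar> \<le> s/2" by linarith+
qed

lemma D_lip':
  assumes cm: "CM_derivs M phi D" and ab: "a + b < M"
    and bd: "\<And>z. z \<in> U \<Longrightarrow> \<bar>D (Suc a) b z\<bar> \<le> C \<and> \<bar>D a (Suc b) z\<bar> \<le> C"
    and z: "z \<in> U" and z': "z' \<in> U"
  shows "\<bar>D a b z - D a b z'\<bar> \<le> C * (\<bar>fst z - fst z'\<bar> + \<bar>snd z - snd z'\<bar>)"
  using D_lip[OF cm ab bd, of "fst z" "snd z" "fst z'" "snd z'"] z z' by simp



theorem mainTheorem9:
  fixes M :: nat and phi :: "real \<times> real \<Rightarrow> real" and K mu :: real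
    and zc1 zc2 :: "real \<times> real"
  assumes "M \<ge> 3" and "phi \<in> Hyp M" and "K \<ge> 1" and "mu \<ge> 1"
    and "zc1 \<in> Sigma1" and "zc2 \<in> Sigma1"
    and "\<bar>t1 phi zc2 zc1 zc2\<bar> \<ge> 50 * sqrt mu / K"
    and "\<bar>t2 phi zc2 zc1 zc2\<bar> \<ge> 50 * sqrt mu / K"
  shows "\<forall>z1\<in>cap (sqrt mu / K) zc1. \<forall>z1'\<in>cap (sqrt mu / K) zc1.
           \<forall>z\<in>cap (sqrt mu / K) zc2. \<forall>z2\<in>cap (sqrt mu / K) zc2. \<forall>z2'\<in>cap (sqrt mu / K) zc2.
             \<bar>Gamma phi z z1 z2 z1' z2'\<bar> \<ge> 4 * mu / K\<^sup>2"
proof -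
  obtain D where cm: "CM_derivs M phi D"
    and n: "D 2 0 (0,0) = 0" "D 1 1 (0,0) = 1" "D 0 2 (0,0) = 0"
    and b3: "\<forall>a b. 3 \<le> a + b \<and> a + b \<le> M \<longrightarrow> (\<forall>z\<in>Sigma2. \<bar>D a b z\<bar> \<le> 10 powi (-5))"
    using assms(2) unfolding Hyp_def by blast
  have pw: "(10::real) powi (-5) = 1/100000" by (simp add: power_int_minus)
  have M: "0 < M" "2 < M" using assms(1) by auto
  have b3': "\<bar>D a b z\<bar> \<le> 1/100000" if "a + b = 3" "z \<in> U" for a b z
    using b3 that U_Sigma2 pw assms(1) by auto
  have O: "(0,0) \<in> U" by (simp add: U_def)
  have lip2: "\<bar>D a b z - D a b z'\<bar> \<le> 1/100000 * (\<bar>fst z - fst z'\<bar> + \<bar>snd z - snd z'\<bar>)"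
    if "a + b = 2" "z \<in> U" "z' \<in> U" for a b z z'
    by (rule D_lip'[OF cm]) (use that M b3' in auto)
  have small: "\<bar>fst z - fst z'\<bar> + \<bar>snd z - snd z'\<bar> \<le> 8" if "z \<in> U" "z' \<in> U" for z z'
    using that by (auto simp: U_def mem_Times_iff abs_le_iff)
  have bnd2: "\<bar>D a b z - D a b (0,0)\<bar> \<le> 1/10000" if "a + b = 2" "z \<in> U" for a b z
  proof -
    have "1/100000 * (\<bar>fst z - fst (0::real,0::real)\<bar> + \<bar>snd z - snd (0::real,0::real)\<bar>) \<le> 1/100000 * 8"
      using small[OF that(2) O] by (intro mult_left_mono) auto
    thus ?thesis using lip2[OF that(1) that(2) O] by linarith
  qed
  have p20: "\<bar>D 2 0 z\<bar> \<le> 1/10000" if "z \<in> U" for z using bnd2[of 2 0 z] that n by simp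
  have p11: "\<bar>D 1 1 z - 1\<bar> \<le> 1/10000" if "z \<in> U" for z using bnd2[of 1 1 z] that n by simp
  have p02: "\<bar>D 0 2 z\<bar> \<le> 1/10000" if "z \<in> U" for z using bnd2[of 0 2 z] that n by simp
  have lip1: "\<bar>D a b z - D a b z'\<bar> \<le> 2 * (\<bar>fst z - fst z'\<bar> + \<bar>snd z - snd z'\<bar>)"
    if "a + b = 1" "z \<in> U" "z' \<in> U" for a b z z'
  proof (rule D_lip'[OF cm])
    show "a + b < M" using that M by auto
    show "z \<in> U" "z' \<in> U" using that by auto
    fix w assume w: "w \<in> U"
    have "a = 1 \<and> b = 0 \<or> a = 0 \<and> b = 1" using that(1) by auto
    moreover have "\<bar>D 2 0 w\<bar> \<le> 2" "\<bar>D 1 1 w\<bar> \<le> 2" "\<bar>D 0 2 w\<bar> \<le> 2"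
      using p20[OF w] p11[OF w] p02[OF w] by linarith+
    ultimately show "\<bar>D (Suc a) b w\<bar> \<le> 2 \<and> \<bar>D a (Suc b) w\<bar> \<le> 2"
      by (auto simp: numeral_2_eq_2)
  qed
  have small1: "\<bar>fst z - fst z'\<bar> + \<bar>snd z - snd z'\<bar> \<le> 4" if "z \<in> Sigma1" "z' \<in> Sigma1" for z z'
    using that by (auto simp: Sigma1_def mem_Times_iff abs_le_iff)
  define s where "s = sqrt mu / K"
  have s0: "s > 0" using assms(3,4) by (simp add: s_def)
  have s2: "4 * mu / K\<^sup>2 = 4 * s^2" using assms(3,4) by (simp add: s_def power_divide)
  show ?thesis unfolding s_def[symmetric] s2
  proof (intro ballI)
    fix z1 z1' z z2 z2'
    assume h: "z1 \<in> cap s zc1" "z1' \<in> cap s zc1" "z \<in> cap s zc2" "z2 \<in> cap s zc2" "z2' \<in> cap s zc2"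
    note cd = cap_D[OF h(1)] cap_D[OF h(2)] cap_D[OF h(3)] cap_D[OF h(4)] cap_D[OF h(5)]
    have inU: "z1 \<in> U" "z1' \<in> U" "z \<in> U" "z2 \<in> U" "z2' \<in> U" "zc1 \<in> U" "zc2 \<in> U"
      using Sigma1_U[OF cd(1)] Sigma1_U[OF cd(4)] Sigma1_U[OF cd(7)] Sigma1_U[OF cd(10)]
        Sigma1_U[OF cd(13)] Sigma1_U[OF assms(5)] Sigma1_U[OF assms(6)] by blast+
    have gd: "\<bar>D a b w - D a b c\<bar> \<le> 2 * s" if "a + b = 1" "w \<in> cap s c" "c \<in> U" for a b w c
    proof -
      note cc = cap_D[OF that(2)]
      have "\<bar>fst w - fst c\<bar> + \<bar>snd w - snd c\<bar> \<le> s" using cc(2,3) by linarith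
      hence "2 * (\<bar>fst w - fst c\<bar> + \<bar>snd w - snd c\<bar>) \<le> 2 * s" by simp
      with lip1[OF that(1) Sigma1_U[OF cc(1)] that(3)] show ?thesis by (rule order_trans)
    qed
    define p where "p = D 2 0 z"
    define q where "q = D 1 1 z"
    define r where "r = D 0 2 z"
    define p0 where "p0 = D 2 0 zc2"
    define q0 where "q0 = D 1 1 zc2"
    define r0 where "r0 = D 0 2 zc2"
    define S where "S = sqrt (q^2 - p*r)"
    define S0 where "S0 = sqrt (q0^2 - p0*r0)"
    define u1 where "u1 = D 1 0 z2 - D 1 0 z1"
    define u2 where "u2 = D 0 1 z2 - D 0 1 z1"
    define v1 where "v1 = D 1 0 z2' - D 1 0 z1'"
    define v2 where "v2 = D 0 1 z2' - D 0 1 z1'"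
    define U1 where "U1 = D 1 0 zc2 - D 1 0 zc1"
    define U2 where "U2 = D 0 1 zc2 - D 0 1 zc1"
    have bp: "\<bar>p\<bar> \<le> 1/10" "\<bar>r\<bar> \<le> 1/10" "\<bar>q - 1\<bar> \<le> 1/10"
      using p20[OF inU(3)] p02[OF inU(3)] p11[OF inU(3)] unfolding p_def q_def r_def by linarith+
    have bp0: "\<bar>p0\<bar> \<le> 1/10" "\<bar>r0\<bar> \<le> 1/10" "\<bar>q0 - 1\<bar> \<le> 1/10"
      using p20[OF inU(7)] p02[OF inU(7)] p11[OF inU(7)] unfolding p0_def q0_def r0_def by linarith+
    note bb = basic_bounds[OF bp, folded S_def]
    have dzz: "\<bar>fst z - fst zc2\<bar> + \<bar>snd z - snd zc2\<bar> \<le> s" using cd(8) cd(9) by linarith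
    have dl: "1/100000 * (\<bar>fst z - fst zc2\<bar> + \<bar>snd z - snd zc2\<bar>) \<le> s/100000"
      using dzz by simp
    have dd: "\<bar>p - p0\<bar> \<le> s/100000" "\<bar>q - q0\<bar> \<le> s/100000" "\<bar>r - r0\<bar> \<le> s/100000"
      unfolding p_def q_def r_def p0_def q0_def r0_def
      using lip2[of 2 0 z zc2, OF _ inU(3) inU(7)] lip2[of 1 1 z zc2, OF _ inU(3) inU(7)]
        lip2[of 0 2 z zc2, OF _ inU(3) inU(7)] dl by simp_all
    have lB: "\<bar>p/(q+S) - p0/(q0+S0)\<bar> \<le> s/100000"
      using quot_lip[OF bp bp0 dd] unfolding S_def S0_def .
    have lA: "\<bar>r/(q+S) - r0/(q0+S0)\<bar> \<le> s/100000"
      using quot_lip[of r p q r0 p0 q0 "s/100000"] bp bp0 dd unfolding S_def S0_def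
      by (simp add: mult.commute abs_minus_commute)
    have Ppos: "q + S > 0" using bb by linarith
    have Bb: "\<bar>p/(q+S)\<bar> \<le> 1/10" "\<bar>r/(q+S)\<bar> \<le> 1/10"
    proof -
      have "\<bar>p\<bar>/(q+S) \<le> (1/10)/(179/100)" by (rule frac_le) (use bp bb in auto)
      hence a: "\<bar>p\<bar>/(q+S) \<le> 1/10" by (rule order_trans) simp
      have "\<bar>r\<bar>/(q+S) \<le> (1/10)/(179/100)" by (rule frac_le) (use bp bb in auto)
      hence b: "\<bar>r\<bar>/(q+S) \<le> 1/10" by (rule order_trans) simp
      have e: "\<bar>q+S\<bar> = q+S" using Ppos by simp
      show "\<bar>p/(q+S)\<bar> \<le> 1/10" "\<bar>r/(q+S)\<bar> \<le> 1/10" using a b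
        unfolding abs_divide e by simp_all
    qed
    have g: "\<bar>D 1 0 z2 - D 1 0 zc2\<bar> \<le> 2 * s" "\<bar>D 1 0 z1 - D 1 0 zc1\<bar> \<le> 2 * s"
       "\<bar>D 1 0 z2' - D 1 0 zc2\<bar> \<le> 2 * s" "\<bar>D 1 0 z1' - D 1 0 zc1\<bar> \<le> 2 * s"
       "\<bar>D 0 1 z2 - D 0 1 zc2\<bar> \<le> 2 * s" "\<bar>D 0 1 z1 - D 0 1 zc1\<bar> \<le> 2 * s"
       "\<bar>D 0 1 z2' - D 0 1 zc2\<bar> \<le> 2 * s" "\<bar>D 0 1 z1' - D 0 1 zc1\<bar> \<le> 2 * s"
      using gd[OF _ h(4) inU(7)] gd[OF _ h(1) inU(6)] gd[OF _ h(5) inU(7)] gd[OF _ h(2) inU(6)]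
      by simp_all
    have eu1: "\<bar>u1 - U1\<bar> \<le> 4 * s" "\<bar>v1 - U1\<bar> \<le> 4 * s"
      "\<bar>u2 - U2\<bar> \<le> 4 * s" "\<bar>v2 - U2\<bar> \<le> 4 * s"
      unfolding u1_def v1_def U1_def u2_def v2_def U2_def
      using g(1,2) apply linarith using g(3,4) apply linarith
      using g(5,6) apply linarith using g(7,8) by linarith
    have bU: "\<bar>U1\<bar> \<le> 8" "\<bar>U2\<bar> \<le> 8"
    proof -
      have d4: "2 * (\<bar>fst zc2 - fst zc1\<bar> + \<bar>snd zc2 - snd zc1\<bar>) \<le> 8"
        using small1[OF assms(6,5)] by simp
      show "\<bar>U1\<bar> \<le> 8" "\<bar>U2\<bar> \<le> 8" unfolding U1_def U2_def
        using lip1[of 1 0 zc2 zc1, OF _ inU(7) inU(6)] lip1[of 0 1 zc2 zc1, OF _ inU(7) inU(6)] d4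
        by simp_all
    qed
    have rw: "px phi w = D 1 0 w" "py phi w = D 0 1 w" "phi_xx phi w = D 2 0 w"
      "phi_xy phi w = D 1 1 w" "phi_yy phi w = D 0 2 w" if "w \<in> U" for w
      using px_D[OF cm M(1) that] py_D[OF cm M(1) that] pxx_D[OF cm M(2) that]
        pxy_D[OF cm M(2) that] pyy_D[OF cm M(2) that] by auto
    have T1eq: "t1 phi zc2 zc1 zc2 = U1 - p0/(q0+S0) * U2"
      unfolding t1_def Bfun_def Hfun_def U1_def U2_def p0_def q0_def r0_def S0_def
      using inU by (simp only: rw)
    have T2eq: "t2 phi zc2 zc1 zc2 = U2 - r0/(q0+S0) * U1"
      unfolding t2_def Afun_def Hfun_def U1_def U2_def p0_def q0_def r0_def S0_def
      using inU by (simp only: rw)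
    have Geq: "Gamma phi z z1 z2 z1' z2' = ((r*u1 - q*u2)/(p*r - q^2)) * v1 + ((- q*u1 + p*u2)/(p*r - q^2)) * v2"
      unfolding Gamma_def Let_def u1_def u2_def v1_def v2_def p_def q_def r_def
      using inU by (simp only: rw)
    have Hpos: "q^2 - p*r > 0" using bb by linarith
    have S2: "S^2 = q^2 - p*r" unfolding S_def using Hpos by simp
    have G2: "Gamma phi z z1 z2 z1' z2' = (q+S)/(2*(q^2 - p*r)) *
        ((u1 - p/(q+S)*u2) * (v2 - r/(q+S) * v1) + (u2 - r/(q+S)*u1) * (v1 - p/(q+S) * v2))"
      unfolding Geq by (rule gamma_id[OF S2 Hpos Ppos])
    have c: "(q+S)/(2*(q^2 - p*r)) \<ge> 1/2"
    proof -
      have "q^2 - p*r \<le> q + S" using bb by linarith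
      thus ?thesis using Hpos by (simp add: le_divide_eq)
    qed
    have T1: "\<bar>U1 - p0/(q0+S0) * U2\<bar> \<ge> 50 * s" using assms(7) T1eq by (simp add: s_def)
    have T2: "\<bar>U2 - r0/(q0+S0) * U1\<bar> \<ge> 50 * s" using assms(8) T2eq by (simp add: s_def)
    have e1: "\<bar>(u1 - p/(q+S)*u2) - (U1 - p0/(q0+S0) * U2)\<bar> \<le> 5 * s"
      by (rule err_bound[OF eu1(1) eu1(3) bU(2) Bb(1) lB s0])
    have e2: "\<bar>(v1 - p/(q+S)* v2) - (U1 - p0/(q0+S0) * U2)\<bar> \<le> 5 * s"
      by (rule err_bound[OF eu1(2) eu1(4) bU(2) Bb(1) lB s0])
    have e3: "\<bar>(u2 - r/(q+S)*u1) - (U2 - r0/(q0+S0) * U1)\<bar> \<le> 5 * s"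
      by (rule err_bound[OF eu1(3) eu1(1) bU(1) Bb(2) lA s0])
    have e4: "\<bar>(v2 - r/(q+S)* v1) - (U2 - r0/(q0+S0) * U1)\<bar> \<le> 5 * s"
      by (rule err_bound[OF eu1(4) eu1(2) bU(1) Bb(2) lA s0])
    show "4 * s^2 \<le> \<bar>Gamma phi z z1 z2 z1' z2'\<bar>"
      unfolding G2 by (rule final_comb[OF s0 T1 T2 e1 e2 e3 e4 c])
  qed
qed

end
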